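(* Let $\Omega\subset\mathbb{R}^N$ be open and bounded and let $p:\Omega\to(1,\infty)$ be Lipschitz continuous with $p^-:=\operatorname{ess\,inf}_\Omega p>1$. Let $q\ge2$ and let $u$ be a uniformly continuous viscosity supersolution to $-\Delta^N_{p(x)}u\ge0$ in $\Omega$. Then there is a function $E$ with $E(\varepsilon)\to0$ as $\varepsilon\to0$, depending only on $p$, $q$ and the modulus of continuity of $u$, such that for every $\varepsilon>0$: whenever $x\in\Omega_{r(\varepsilon)}$, $(\eta,X)\in J^{2,-}u_\varepsilon(x)$ and $\eta\ne0$, it holds $$|\eta|^{\min(p(x)-2,0)}F(x,\eta,X)\ge E(\varepsilon).$$
   Context: For $x\in\Omega$, $\eta\ne0$, $X$ symmetric $N\times N$: $F(x,\eta,X):=-\big(\operatorname{tr}X+\frac{p(x)-2}{|\eta|^2}\langle X\eta,\eta\rangle\big)$. The subjet $J^{2,-}v(x)$ is the set of $(\eta,X)$ with $v(y)\ge v(x)+\eta\cdot(y-x)+\frac12\langle X(y-x),y-x\rangle+o(|y-x|^2)$ as $y\to x$. A lower semicontinuous $u$ is a viscosity supersolution to $-\Delta^N_{p(x)}u\ge0$ if $F(x,\eta,X)\ge0$ whenever $x\in\Omega$, $(\eta,X)\in J^{2,-}u(x)$, $\eta\ne0$ (nothing required when $\eta=0$). Inf-convolution: for bounded $u\in C(\Omega)$, $q\ge2$, $\varepsilon>0$, $u_\varepsilon(x):=\inf_{y\in\Omega}\{u(y)+\frac{1}{q\varepsilon^{q-1}}|x-y|^q\}$. Set $r(\varepsilon):=(q\varepsilon^{q-1}\operatorname{osc}_\Omega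 u)^{1/q}$ and $\Omega_{r(\varepsilon)}:=\{x\in\Omega:\operatorname{dist}(x,\partial\Omega)>r(\varepsilon)\}$. *)

theory Defs
  imports "HOL-Analysis.Analysis"
begin

definition symmetric_mat :: "real^'n^'n \<Rightarrow> bool" where
  "symmetric_mat X \<longleftrightarrow> transpose X = X"

definition subjet2 :: "(real^'n) set \<Rightarrow> (real^'n \<Rightarrow> real) \<Rightarrow> real^'n
                        \<Rightarrow> ((real^'n) \<times> (real^'n^'n)) set" where
  "subjet2 S v x = {(\<eta>, X). symmetric_mat X \<and>
     (\<forall>e>0. \<exists>\<delta>>0. \<forall>y\<in>S. norm (y - x) < \<delta> \<longrightarrow>
        v y \<ge> v x + \<eta> \<bullet> (y - x) + (1/2) * ((X *v (y - x)) \<bullet> (y - x)) - e * (norm (y - x))\<^sup>2)}"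

definition Fop :: "(real^'n \<Rightarrow> real) \<Rightarrow> real^'n \<Rightarrow> real^'n \<Rightarrow> real^'n^'n \<Rightarrow> real" where
  "Fop p x \<eta> X = - (trace X + (p x - 2) / (norm \<eta>)\<^sup>2 * ((X *v \<eta>) \<bullet> \<eta>))"

definition lsc_on :: "(real^'n) set \<Rightarrow> (real^'n \<Rightarrow> real) \<Rightarrow> bool" where
  "lsc_on S u \<longleftrightarrow> (\<forall>x\<in>S. \<forall>e>0. \<exists>\<delta>>0. \<forall>y\<in>S. norm (y - x) < \<delta> \<longrightarrow> u y > u x - e)"

definition visc_supersol :: "(real^'n) set \<Rightarrow> (real^'n \<Rightarrow> real) \<Rightarrow> (real^'n \<Rightarrow> real) \<Rightarrow> bool" where
  "visc_supersol \<Omega> p u \<longleftrightarrow> lsc_on \<Omega> u \<and>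
     (\<forall>x\<in>\<Omega>. \<forall>\<eta> X. (\<eta>, X) \<in> subjet2 \<Omega> u x \<longrightarrow> \<eta> \<noteq> 0 \<longrightarrow> Fop p x \<eta> X \<ge> 0)"

definition infconv :: "(real^'n) set \<Rightarrow> (real^'n \<Rightarrow> real) \<Rightarrow> real \<Rightarrow> real \<Rightarrow> real^'n \<Rightarrow> real" where
  "infconv \<Omega> u q \<epsilon> x = (INF y\<in>\<Omega>. u y + (norm (x - y)) powr q / (q * \<epsilon> powr (q - 1)))"

definition osc :: "(real^'n) set \<Rightarrow> (real^'n \<Rightarrow> real) \<Rightarrow> real" where
  "osc \<Omega> u = (SUP x\<in>\<Omega>. u x) - (INF x\<in>\<Omega>. u x)"

definition rad :: "(real^'n) set \<Rightarrow> (real^'n \<Rightarrow> real) \<Rightarrow> real \<Rightarrow> real \<Rightarrow> real" where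
  "rad \<Omega> u q \<epsilon> = (q * \<epsilon> powr (q - 1) * osc \<Omega> u) powr (1 / q)"

definition inner_set :: "(real^'n) set \<Rightarrow> real \<Rightarrow> (real^'n) set" where
  "inner_set \<Omega> r = {x\<in>\<Omega>. infdist x (frontier \<Omega>) > r}"

end

theory Submission
  imports Defs
begin


lemma taylor_pow:
  fixes \<rho> t q :: real
  assumes "\<rho> > 0" "q \<ge> 2" "\<bar>t\<bar> \<le> \<rho>/2"
  shows "(\<rho>+t) powr q \<le> \<rho> powr q + q*\<rho> powr (q-1)*t + q*(q-1)/2 * (2*\<rho>) powr (q-2) * t\<^sup>2"
proof (cases "t = 0")
  case True then show ?thesis by simp
next
  case False
  define diff :: "nat \<Rightarrow> real \<Rightarrow> real" where
    "diff = (\<lambda>m s. if m = 0 then s powr q else if m = 1 then q * s powr (q-1) else q*(q-1)* s powr (q-2))"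
  have D: "\<forall>m s. m < 2 \<and> \<rho>/2 \<le> s \<and> s \<le> 2*\<rho> \<longrightarrow> DERIV (diff m) s :> diff (Suc m) s"
  proof (intro allI impI)
    fix m :: nat and s :: real assume h: "m < 2 \<and> \<rho>/2 \<le> s \<and> s \<le> 2*\<rho>"
    then have s: "s > 0" using assms by auto
    show "DERIV (diff m) s :> diff (Suc m) s"
    proof (cases "m = 0")
      case True
      then show ?thesis using has_real_derivative_powr[OF s, of q] by (simp add: diff_def)
    next
      case False
      then have "m = 1" using h by auto
      then show ?thesis using DERIV_cmult[OF has_real_derivative_powr[OF s, of "q-1"], of q]
        by (simp add: diff_def algebra_simps)
    qed
  qed
  have "\<rho>/2 \<le> \<rho>+t" "\<rho>+t \<le> 2*\<rho>" using assms by auto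
  from Taylor[of 2 diff "\<lambda>s. s powr q" "\<rho>/2" "2*\<rho>" \<rho> "\<rho>+t", OF _ _ D _ _ this] assms False
  obtain \<xi> where \<xi>: "(if \<rho>+t < \<rho> then \<rho>+t < \<xi> \<and> \<xi> < \<rho> else \<rho> < \<xi> \<and> \<xi> < \<rho>+t)"
    and eq: "(\<rho>+t) powr q = (\<Sum>m<2. (diff m \<rho> / fact m) * (\<rho>+t - \<rho>)^m) + (diff 2 \<xi> / fact 2) * (\<rho>+t - \<rho>)^2"
    by (auto simp: diff_def)
  have \<xi>pos: "0 < \<xi>" "\<xi> \<le> 2*\<rho>" using \<xi> assms by (auto split: if_splits)
  have "\<xi> powr (q-2) \<le> (2*\<rho>) powr (q-2)"
    using \<xi>pos assms by (intro powr_mono2) auto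
  then have "q*(q-1)*\<xi> powr (q-2) * t\<^sup>2 \<le> q*(q-1)*(2*\<rho>) powr (q-2) * t\<^sup>2"
    using assms by (intro mult_right_mono mult_left_mono) auto
  moreover have "(\<rho>+t) powr q = \<rho> powr q + q*\<rho> powr (q-1)*t + q*(q-1)*\<xi> powr (q-2) * t\<^sup>2 / 2"
    using eq by (simp add: diff_def eval_nat_numeral)
  ultimately show ?thesis by simp
qed



lemma deriv_squeeze:
  fixes g :: "real \<Rightarrow> real"
  assumes D: "(g has_real_derivative D) (at 0)"
    and ev: "\<forall>\<^sub>F t in at 0. t * a - C * t\<^sup>2 \<le> g t - g 0"
  shows "a = D"
proof -
  have lim: "((\<lambda>t. (g t - g 0) / (t - 0)) \<longlongrightarrow> D) (at 0)"
    using D by (simp add: has_field_derivative_iff)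
  have limR: "((\<lambda>t. (g t - g 0) / (t - 0)) \<longlongrightarrow> D) (at_right 0)"
    using lim by (rule tendsto_mono[OF at_le, rotated]) simp
  have limL: "((\<lambda>t. (g t - g 0) / (t - 0)) \<longlongrightarrow> D) (at_left 0)"
    using lim by (rule tendsto_mono[OF at_le, rotated]) simp
  have l2: "((\<lambda>t. a - C * t) \<longlongrightarrow> a - C * 0) (at 0 within S)" for S
    by (intro tendsto_intros)
  have evR: "\<forall>\<^sub>F t in at_right 0. a - C * t \<le> (g t - g 0) / (t - 0)"
  proof -
    have "\<forall>\<^sub>F t in at_right 0. t * a - C * t\<^sup>2 \<le> g t - g 0"
      using ev by (rule filter_leD[OF at_le, rotated]) simp
    moreover have "\<forall>\<^sub>F t in at_right (0::real). t > 0" by (simp add: eventually_at_right_less)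
    ultimately show ?thesis
    proof eventually_elim
      case (elim t)
      then have "(t * a - C * t\<^sup>2) / t \<le> (g t - g 0) / t" by (intro divide_right_mono) auto
      moreover have "(t * a - C * t\<^sup>2) / t = a - C * t" using elim by (simp add: field_simps power2_eq_square)
      ultimately show ?case by simp
    qed
  qed
  have evL: "\<forall>\<^sub>F t in at_left 0. (g t - g 0) / (t - 0) \<le> a - C * t"
  proof -
    have "\<forall>\<^sub>F t in at_left 0. t * a - C * t\<^sup>2 \<le> g t - g 0"
      using ev by (rule filter_leD[OF at_le, rotated]) simp
    moreover have "\<forall>\<^sub>F t in at_left (0::real). t < 0" by (simp add: eventually_at_filter)
    ultimately show ?thesis
    proof eventually_elim
      case (elim t)
      then have "(g t - g 0) / t \<le> (t * a - C * t\<^sup>2) / t" by (intro divide_right_mono_neg) auto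
      moreover have "(t * a - C * t\<^sup>2) / t = a - C * t" using elim by (simp add: field_simps power2_eq_square)
      ultimately show ?case by simp
    qed
  qed
  have "a \<le> D" using tendsto_le[OF trivial_limit_at_right_real limR l2 evR] by simp
  moreover have "D \<le> a" using tendsto_le[OF trivial_limit_at_left_real l2 limL evL] by simp
  ultimately show ?thesis by simp
qed

definition outer :: "real^'n \<Rightarrow> real^'n \<Rightarrow> real^'n^'n" where
  "outer a b = (\<chi> i j. a$i * b$j)"

lemma outer_mult: "outer a b *v h = (b \<bullet> h) *\<^sub>R a"
  by (simp add: outer_def matrix_vector_mult_def inner_vec_def vec_eq_iff sum_distrib_left mult_ac)

lemma trace_outer: "trace (outer a b) = a \<bullet> b"
  by (simp add: outer_def trace_def inner_vec_def)

lemma transpose_outer: "transpose (outer a b) = outer b a"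
  by (simp add: outer_def transpose_def vec_eq_iff mult_ac)

lemma sym_inner:
  fixes X :: "real^'n^'n"
  assumes "symmetric_mat X"
  shows "(X *v a) \<bullet> b = a \<bullet> (X *v b)"
proof -
  have "a \<bullet> (X *v b) = (a v* X) \<bullet> b" by (simp add: dot_lmul_matrix)
  also have "a v* X = transpose X *v a" by simp
  also have "\<dots> = X *v a" using assms by (simp add: symmetric_mat_def)
  finally show ?thesis by simp
qed

lemma trace_scaleR: "trace (c *\<^sub>R (A::real^'n^'n)) = c * trace A"
  by (simp add: trace_def sum_distrib_left)

lemma transpose_scaleR: "transpose (c *\<^sub>R (A::real^'n^'n)) = c *\<^sub>R transpose A"
  by (simp add: transpose_def vec_eq_iff)

lemma transpose_add': "transpose ((A::real^'n^'n) + B) = transpose A + transpose B"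
  by (simp add: transpose_def vec_eq_iff)

lemma scaleR_mat_mult: "(c *\<^sub>R (A::real^'n^'n)) *v h = c *\<^sub>R (A *v h)"
  by (simp add: matrix_vector_mult_def vec_eq_iff sum_distrib_left mult_ac)

lemma add_mat_mult: "((A::real^'n^'n) + B) *v h = A *v h + B *v h"
  by (simp add: matrix_vector_mult_def vec_eq_iff sum.distrib algebra_simps)



lemma norm_powr_inner: "norm (z::'a::real_inner) powr q = (z \<bullet> z) powr (q/2)"
proof -
  have "norm z powr q = (sqrt (z \<bullet> z)) powr q" by (simp add: norm_eq_sqrt_inner)
  also have "\<dots> = ((z \<bullet> z) powr (1/2)) powr q" by (simp add: powr_half_sqrt)
  also have "\<dots> = (z \<bullet> z) powr (q/2)" by (simp add: powr_powr)
  finally show ?thesis .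
qed

lemma deriv_norm_powr:
  fixes w v :: "'a::real_inner"
  assumes "w \<noteq> 0"
  shows "((\<lambda>t. norm (w + t *\<^sub>R v) powr q) has_real_derivative (q * norm w powr (q-2) * (w \<bullet> v))) (at 0)"
proof -
  define P where "P t = w \<bullet> w + 2 * t * (w \<bullet> v) + t\<^sup>2 * (v \<bullet> v)" for t
  have eqP: "(w + t *\<^sub>R v) \<bullet> (w + t *\<^sub>R v) = P t" for t
    by (simp add: P_def inner_add_left inner_add_right inner_commute power2_eq_square algebra_simps)
  have dP: "(P has_real_derivative 2 * (w \<bullet> v)) (at 0)"
    unfolding P_def by (auto intro!: derivative_eq_intros)
  have P0: "P 0 > 0" using assms by (simp add: P_def)
  have "((\<lambda>t. P t powr (q/2)) has_real_derivative (q/2) * P 0 powr (q/2 - of_nat 1) * (2 * (w \<bullet> v))) (at 0)"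
    by (rule DERIV_fun_powr[OF dP P0])
  moreover have "P 0 powr (q/2 - 1) = norm w powr (q-2)"
  proof -
    have "norm w powr (q-2) = (w \<bullet> w) powr ((q-2)/2)" by (rule norm_powr_inner)
    also have "(q-2)/2 = q/2 - 1" by simp
    finally show ?thesis by (simp add: P_def)
  qed
  ultimately have "((\<lambda>t. P t powr (q/2)) has_real_derivative (q * norm w powr (q-2) * (w \<bullet> v))) (at 0)"
    by (simp add: mult.assoc)
  moreover have "(\<lambda>t. norm (w + t *\<^sub>R v) powr q) = (\<lambda>t. P t powr (q/2))"
    by (simp add: norm_powr_inner eqP)
  ultimately show ?thesis by simp
qed

lemma small_lin_zero:
  fixes a C \<delta> :: real
  assumes "\<delta> > 0" "\<And>t. 0 < t \<Longrightarrow> t < \<delta> \<Longrightarrow> t * a \<le> C * t\<^sup>2"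
  shows "a \<le> 0"
proof (rule ccontr)
  assume "\<not> a \<le> 0"
  then have a: "a > 0" by simp
  define t where "t = min (\<delta>/2) (a / (2*(\<bar>C\<bar>+1)))"
  have t: "0 < t" "t < \<delta>" using a assms(1) by (auto simp: t_def)
  have "t * a \<le> C * t\<^sup>2" using assms(2)[OF t] .
  also have "\<dots> \<le> \<bar>C\<bar> * t * t" using abs_ge_self[of C] t by (simp add: power2_eq_square mult_right_mono)
  also have "\<dots> < (\<bar>C\<bar>+1) * t * t" using t by simp
  also have "(\<bar>C\<bar>+1) * t \<le> a/2"
  proof -
    have "t \<le> a / (2*(\<bar>C\<bar>+1))" by (simp add: t_def)
    then show ?thesis by (simp add: field_simps)
  qed
  then have "(\<bar>C\<bar>+1) * t * t \<le> a/2 * t" using t by (intro mult_right_mono) auto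
  finally show False using t a by (simp add: field_simps)
qed



lemma core1:
  fixes \<Omega> :: "(real^'n) set" and u ue :: "real^'n \<Rightarrow> real"
  assumes "open \<Omega>" "x \<in> \<Omega>" "q \<ge> 2" "\<epsilon> > 0"
    and ue_le: "\<And>z. ue z \<le> u y + norm (z - y) powr q / (q * \<epsilon> powr (q-1))"
    and ue_x: "ue x = u y + norm (x - y) powr q / (q * \<epsilon> powr (q-1))"
    and sj: "(\<eta>, X) \<in> subjet2 \<Omega> ue x" and "\<eta> \<noteq> 0"
  shows "x \<noteq> y \<and> \<eta> = (norm (x-y) powr (q-2) / \<epsilon> powr (q-1)) *\<^sub>R (x - y)"
proof -
  define c0 where "c0 = q * \<epsilon> powr (q-1)"
  have c0: "c0 > 0" using assms by (simp add: c0_def)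
  define w where "w = x - y"
  define g where "g v t = norm (w + t *\<^sub>R v) powr q / c0" for v t
  obtain \<delta> where \<delta>: "\<delta> > 0" and
    H: "\<And>z. z \<in> \<Omega> \<Longrightarrow> norm (z - x) < \<delta> \<Longrightarrow>
        ue z \<ge> ue x + \<eta> \<bullet> (z - x) + (1/2) * ((X *v (z - x)) \<bullet> (z - x)) - 1 * (norm (z - x))\<^sup>2"
    using sj unfolding subjet2_def by (auto dest!: spec[of _ 1])
  have ev: "\<forall>\<^sub>F t in at 0. t * (\<eta> \<bullet> v) - (\<bar>(X *v v) \<bullet> v\<bar>/2 + (norm v)\<^sup>2) * t\<^sup>2 \<le> g v t - g v 0" for v
  proof -
    have lim: "((\<lambda>t. x + t *\<^sub>R v) \<longlongrightarrow> x + 0 *\<^sub>R v) (at 0)"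
      by (intro tendsto_intros)
    have e1: "\<forall>\<^sub>F t in at 0. x + t *\<^sub>R v \<in> \<Omega>"
      using topological_tendstoD[OF lim \<open>open \<Omega>\<close>] \<open>x \<in> \<Omega>\<close> by simp
    have lim2: "((\<lambda>t. norm (t *\<^sub>R v)) \<longlongrightarrow> norm (0 *\<^sub>R v)) (at (0::real))"
      by (intro tendsto_intros)
    have e2: "\<forall>\<^sub>F t in at 0. norm (t *\<^sub>R v) < \<delta>"
      using order_tendstoD(2)[OF lim2] \<delta> by simp
    from e1 e2 show ?thesis
    proof eventually_elim
      case (elim t)
      define A where "A = (X *v v) \<bullet> v"
      have h1: "ue (x + t *\<^sub>R v) \<ge> ue x + \<eta> \<bullet> (t *\<^sub>R v) + (1/2) * ((X *v (t *\<^sub>R v)) \<bullet> (t *\<^sub>R v)) - 1 * (norm (t *\<^sub>R v))\<^sup>2"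
        using H[of "x + t *\<^sub>R v"] elim by simp
      have h2: "ue (x + t *\<^sub>R v) \<le> u y + g v t"
        using ue_le[of "x + t *\<^sub>R v"] by (simp add: g_def c0_def w_def algebra_simps)
      have h3: "ue x = u y + g v 0" by (simp add: ue_x g_def c0_def w_def)
      have h4: "(X *v (t *\<^sub>R v)) \<bullet> (t *\<^sub>R v) = t\<^sup>2 * A"
        by (simp add: A_def matrix_vector_mult_def vec_eq_iff power2_eq_square inner_vec_def sum_distrib_left mult_ac
            scaleR_vec_def)
      have h5: "-\<bar>A\<bar> * t\<^sup>2 \<le> A * t\<^sup>2"
        by (rule mult_right_mono) (use abs_ge_minus_self[of A] in auto)
      have h6: "(norm (t *\<^sub>R v))\<^sup>2 = t\<^sup>2 * (norm v)\<^sup>2" by (simp add: power_mult_distrib)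
      have "t * (\<eta> \<bullet> v) - (\<bar>A\<bar>/2 + (norm v)\<^sup>2) * t\<^sup>2 = t * (\<eta> \<bullet> v) + (1/2) * (-\<bar>A\<bar> * t\<^sup>2) - t\<^sup>2 * (norm v)\<^sup>2"
        by (simp add: algebra_simps)
      also have "\<dots> \<le> t * (\<eta> \<bullet> v) + (1/2) * (A * t\<^sup>2) - t\<^sup>2 * (norm v)\<^sup>2"
        using h5 by simp
      also have "\<dots> = \<eta> \<bullet> (t *\<^sub>R v) + (1/2) * ((X *v (t *\<^sub>R v)) \<bullet> (t *\<^sub>R v)) - 1 * (norm (t *\<^sub>R v))\<^sup>2"
        unfolding h4 h6 by (simp add: algebra_simps)
      also have "\<dots> \<le> ue (x + t *\<^sub>R v) - ue x" using h1 by simp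
      also have "\<dots> \<le> g v t - g v 0" using h2 h3 by simp
      finally show ?case by (simp add: A_def)
    qed
  qed
  have "w \<noteq> 0"
  proof
    assume w0: "w = 0"
    obtain d where d: "d > 0" and Hd: "\<And>t. t \<noteq> 0 \<Longrightarrow> dist t 0 < d \<Longrightarrow>
        t * (\<eta> \<bullet> \<eta>) - (\<bar>(X *v \<eta>) \<bullet> \<eta>\<bar>/2 + (norm \<eta>)\<^sup>2) * t\<^sup>2 \<le> g \<eta> t - g \<eta> 0"
      using ev[of \<eta>] unfolding eventually_at by blast
    define C where "C = (\<bar>(X *v \<eta>) \<bullet> \<eta>\<bar>/2 + (norm \<eta>)\<^sup>2) + norm \<eta> powr q / c0"
    have "\<eta> \<bullet> \<eta> \<le> 0"
    proof (rule small_lin_zero[of "min d 1" _ C])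
      show "0 < min d 1" using d by simp
      fix t :: real assume t: "0 < t" "t < min d 1"
      have "g \<eta> t - g \<eta> 0 = t powr q * norm \<eta> powr q / c0"
        using t by (simp add: g_def w0 powr_mult)
      also have "t powr q \<le> t powr 2" using t assms(3) by (intro powr_mono') auto
      then have "t powr q * norm \<eta> powr q / c0 \<le> t\<^sup>2 * (norm \<eta> powr q / c0)"
        using c0 t by (simp add: divide_right_mono mult_right_mono)
      finally show "t * (\<eta> \<bullet> \<eta>) \<le> C * t\<^sup>2"
        using Hd[of t] t by (simp add: C_def algebra_simps)
    qed
    then show False using \<open>\<eta> \<noteq> 0\<close> inner_gt_zero_iff[of \<eta>] by linarith
  qed
  define k where "k = norm w powr (q-2) / \<epsilon> powr (q-1)"
  have dir: "\<eta> \<bullet> v = k * (w \<bullet> v)" for v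
  proof -
    have "((\<lambda>t. norm (w + t *\<^sub>R v) powr q) has_real_derivative (q * norm w powr (q-2) * (w \<bullet> v))) (at 0)"
      by (rule deriv_norm_powr[OF \<open>w \<noteq> 0\<close>])
    then have "(g v has_real_derivative (q * norm w powr (q-2) * (w \<bullet> v)) / c0) (at 0)"
      unfolding g_def by (rule DERIV_cdivide)
    from deriv_squeeze[OF this ev[of v]] have "\<eta> \<bullet> v = q * norm w powr (q - 2) * (w \<bullet> v) / c0" .
    also have "\<dots> = k * (w \<bullet> v)" using assms by (simp add: k_def c0_def)
    finally show ?thesis .
  qed
  have "(\<eta> - k *\<^sub>R w) \<bullet> (\<eta> - k *\<^sub>R w) = 0"
    using dir[of "\<eta> - k *\<^sub>R w"] by (simp add: inner_diff_left inner_diff_right inner_commute algebra_simps)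
  then have "\<eta> = k *\<^sub>R w" by simp
  then show ?thesis using \<open>w \<noteq> 0\<close> by (simp add: k_def w_def)
qed



lemma Xa_inner:
  fixes X :: "real^'n^'n"
  assumes sym: "symmetric_mat X"
  shows "((X + c *\<^sub>R (outer e (X *v e) + outer (X *v e) e) + d *\<^sub>R outer e e) *v h) \<bullet> h
     = (X *v h) \<bullet> h + 2 * c * (e \<bullet> h) * ((X *v e) \<bullet> h) + d * (e \<bullet> h)\<^sup>2"
  by (simp add: add_mat_mult scaleR_mat_mult outer_mult inner_add_left inner_commute power2_eq_square algebra_simps)

lemma XA_inner:
  fixes X :: "real^'n^'n"
  assumes sym: "symmetric_mat X"
  shows "(X *v (h + \<tau> *\<^sub>R e)) \<bullet> (h + \<tau> *\<^sub>R e) = (X *v h) \<bullet> h + 2 * \<tau> * ((X *v e) \<bullet> h) + \<tau>\<^sup>2 * ((X *v e) \<bullet> e)"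
proof -
  have l: "X *v (h + \<tau> *\<^sub>R e) = X *v h + \<tau> *\<^sub>R (X *v e)"
    by (simp add: matrix_vector_right_distrib matrix_vector_mult_scaleR)
  have "(X *v h) \<bullet> e = (X *v e) \<bullet> h" using sym_inner[OF sym, of h e] by (simp add: inner_commute)
  then show ?thesis
    by (simp add: l inner_add_left inner_add_right power2_eq_square algebra_simps)
qed

lemma Xa_sym:
  fixes X :: "real^'n^'n"
  assumes sym: "symmetric_mat X"
  shows "symmetric_mat (X + c *\<^sub>R (outer e (X *v e) + outer (X *v e) e) + d *\<^sub>R outer e e)"
  using sym by (simp add: symmetric_mat_def transpose_add' transpose_scaleR transpose_outer add.commute)

lemma Xa_trace:
  fixes X :: "real^'n^'n"
  shows "trace (X + c *\<^sub>R (outer e (X *v e) + outer (X *v e) e) + d *\<^sub>R outer e e)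
     = trace X + 2 * c * ((X *v e) \<bullet> e) + d * (e \<bullet> e)"
  by (simp add: trace_add trace_scaleR trace_outer inner_commute algebra_simps)



lemma transfer:
  fixes \<Omega> :: "(real^'n) set" and u ue :: "real^'n \<Rightarrow> real"
  assumes "open \<Omega>" "x \<in> \<Omega>" "q \<ge> 2" "\<epsilon> > 0"
    and ue_le: "\<And>z y'. y' \<in> \<Omega> \<Longrightarrow> ue z \<le> u y' + norm (z - y') powr q / (q * \<epsilon> powr (q-1))"
    and ue_x: "ue x = u y + norm (x - y) powr q / (q * \<epsilon> powr (q-1))"
    and sj: "(\<eta>, X) \<in> subjet2 \<Omega> ue x" and "x \<noteq> y"
    and eta: "\<eta> = (norm (x-y) powr (q-2) / \<epsilon> powr (q-1)) *\<^sub>R (x - y)"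
  defines "\<rho> \<equiv> norm (x-y)" and "e \<equiv> (1/norm (x-y)) *\<^sub>R (x-y)"
    and "a' \<equiv> (q-1)*(2*norm (x-y)) powr (q-2) / \<epsilon> powr (q-1)"
  shows "(\<eta>, X + (\<alpha>-1) *\<^sub>R (outer e (X *v e) + outer (X *v e) e)
            + ((\<alpha>-1)\<^sup>2*((X *v e) \<bullet> e - a')) *\<^sub>R outer e e) \<in> subjet2 \<Omega> u y"
proof -
  define Xa where "Xa = X + (\<alpha>-1) *\<^sub>R (outer e (X *v e) + outer (X *v e) e)
            + ((\<alpha>-1)\<^sup>2*((X *v e) \<bullet> e - a')) *\<^sub>R outer e e"
  define c0 where "c0 = q * \<epsilon> powr (q-1)"
  have c0: "c0 > 0" using assms by (simp add: c0_def)
  have \<rho>: "\<rho> > 0" using \<open>x \<noteq> y\<close> by (simp add: \<rho>_def)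
  have w: "x - y = \<rho> *\<^sub>R e" using \<rho> by (simp add: e_def \<rho>_def)
  have ne: "norm e = 1" using \<rho> by (simp add: e_def \<rho>_def)
  define n\<eta> where "n\<eta> = \<rho> powr (q-1) / \<epsilon> powr (q-1)"
  have eta2: "\<eta> = n\<eta> *\<^sub>R e"
  proof -
    have "\<rho> powr (q-2) * \<rho> = \<rho> powr (q-1)" using \<rho> powr_add[of \<rho> "q-2" 1] by simp
    moreover have "\<eta> = (\<rho> powr (q-2)/\<epsilon> powr (q-1)) *\<^sub>R (x - y)" using eta by (simp add: \<rho>_def)
    then have "\<eta> = (\<rho> powr (q-2)/\<epsilon> powr (q-1) * \<rho>) *\<^sub>R e" by (simp add: w)
    ultimately show ?thesis by (simp add: n\<eta>_def mult.commute)
  qed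
  have symX: "symmetric_mat X" using sj by (simp add: subjet2_def)
  have "symmetric_mat Xa" unfolding Xa_def by (rule Xa_sym[OF symX])
  moreover have "\<exists>\<delta>>0. \<forall>z\<in>\<Omega>. norm (z - y) < \<delta> \<longrightarrow>
        u z \<ge> u y + \<eta> \<bullet> (z - y) + (1/2) * ((Xa *v (z - y)) \<bullet> (z - y)) - e0 * (norm (z - y))\<^sup>2"
    if e0: "e0 > 0" for e0
  proof -
    define \<beta> where "\<beta> = 1 + \<bar>\<alpha> - 1\<bar>"
    have \<beta>: "\<beta> \<ge> 1" by (simp add: \<beta>_def)
    obtain \<delta>1 where \<delta>1: "\<delta>1 > 0" and H: "\<And>z. z \<in> \<Omega> \<Longrightarrow> norm (z - x) < \<delta>1 \<Longrightarrow>
        ue z \<ge> ue x + \<eta> \<bullet> (z - x) + (1/2) * ((X *v (z - x)) \<bullet> (z - x)) - (e0/\<beta>\<^sup>2) * (norm (z - x))\<^sup>2"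
      using sj e0 \<beta> unfolding subjet2_def by (auto dest!: spec[of _ "e0/\<beta>\<^sup>2"])
    obtain \<delta>2 where \<delta>2: "\<delta>2 > 0" "ball x \<delta>2 \<subseteq> \<Omega>"
      using \<open>open \<Omega>\<close> \<open>x \<in> \<Omega>\<close> open_contains_ball by blast
    define \<delta> where "\<delta> = min \<delta>1 (min \<delta>2 (\<rho>/2)) / \<beta>"
    have \<delta>: "\<delta> > 0" using \<delta>1 \<delta>2 \<rho> \<beta> by (simp add: \<delta>_def)
    show ?thesis
    proof (intro exI[of _ \<delta>] conjI ballI impI \<delta>)
      fix z assume z: "z \<in> \<Omega>" "norm (z - y) < \<delta>"
      define h where "h = z - y"
      define \<tau> where "\<tau> = (\<alpha> - 1) * (e \<bullet> h)"
      define Ah where "Ah = h + \<tau> *\<^sub>R e"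
      have t1: "\<bar>\<tau>\<bar> \<le> \<bar>\<alpha>-1\<bar> * norm h"
        using Cauchy_Schwarz_ineq2[of e h] ne by (simp add: \<tau>_def abs_mult mult_left_mono)
      have nAh: "norm Ah \<le> \<beta> * norm h"
      proof -
        have "norm Ah \<le> norm h + \<bar>\<tau>\<bar>" using norm_triangle_ineq[of h "\<tau> *\<^sub>R e"] ne by (simp add: Ah_def)
        then show ?thesis using t1 by (simp add: \<beta>_def algebra_simps)
      qed
      have bh: "\<beta> * norm h < min \<delta>1 (min \<delta>2 (\<rho>/2))"
        using z \<beta> by (simp add: h_def \<delta>_def field_simps)
      then have small: "norm Ah < \<delta>1" "norm Ah < \<delta>2" "\<bar>\<tau>\<bar> < \<rho>/2" "\<bar>\<tau>\<bar> \<le> \<rho>/2"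
      proof -
        have "\<bar>\<alpha>-1\<bar> * norm h \<le> (1+\<bar>\<alpha>-1\<bar>) * norm h" by (simp add: distrib_right)
        then show "norm Ah < \<delta>1" "norm Ah < \<delta>2" "\<bar>\<tau>\<bar> < \<rho>/2" "\<bar>\<tau>\<bar> \<le> \<rho>/2"
          using bh nAh t1 \<beta> by (auto simp: \<beta>_def)
      qed
      define z' where "z' = x + Ah"
      have z'\<Omega>: "z' \<in> \<Omega>" using small \<delta>2 by (auto simp: z'_def dist_norm)
      have A1: "ue z' \<ge> ue x + \<eta> \<bullet> Ah + (1/2) * ((X *v Ah) \<bullet> Ah) - (e0/\<beta>\<^sup>2) * (norm Ah)\<^sup>2"
        using H[OF z'\<Omega>] small by (simp add: z'_def)
      have zz: "z' - z = (\<rho> + \<tau>) *\<^sub>R e"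
        using w by (simp add: z'_def Ah_def h_def algebra_simps)
      have nzz: "norm (z' - z) = \<rho> + \<tau>" using zz ne small \<rho> by simp
      have A2: "ue z' \<le> u z + (\<rho> + \<tau>) powr q / c0"
        using ue_le[OF z(1), of z'] nzz by (simp add: c0_def)
      have tay: "(\<rho>+\<tau>) powr q \<le> \<rho> powr q + q*\<rho> powr (q-1)*\<tau> + q*(q-1)/2 * (2*\<rho>) powr (q-2) * \<tau>\<^sup>2"
        by (rule taylor_pow[OF \<rho> \<open>q \<ge> 2\<close> small(4)])
      have A3: "(\<rho> + \<tau>) powr q / c0 \<le> \<rho> powr q / c0 + n\<eta> * \<tau> + a' / 2 * \<tau>\<^sup>2"
      proof -
        have "(\<rho> + \<tau>) powr q / c0 \<le> (\<rho> powr q + q*\<rho> powr (q-1)*\<tau> + q*(q-1)/2 * (2*\<rho>) powr (q-2) * \<tau>\<^sup>2) / c0"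
          using tay c0 by (simp add: divide_right_mono)
        also have "\<dots> = \<rho> powr q / c0 + n\<eta> * \<tau> + a' / 2 * \<tau>\<^sup>2"
          using assms(3) assms(4) by (simp add: c0_def n\<eta>_def a'_def \<rho>_def add_divide_distrib)
        finally show ?thesis .
      qed
      have uex: "ue x = u y + \<rho> powr q / c0" by (simp add: ue_x \<rho>_def c0_def)
      have etaAh: "\<eta> \<bullet> Ah = \<eta> \<bullet> h + \<tau> * n\<eta>"
        using ne by (simp add: Ah_def eta2 inner_add_right power2_norm_eq_inner[symmetric])
      have XAh: "(X *v Ah) \<bullet> Ah - a' * \<tau>\<^sup>2 = (Xa *v h) \<bullet> h"
        unfolding Ah_def Xa_def XA_inner[OF symX] Xa_inner[OF symX]
        by (simp add: \<tau>_def power2_eq_square algebra_simps)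
      have err: "(e0/\<beta>\<^sup>2) * (norm Ah)\<^sup>2 \<le> e0 * (norm h)\<^sup>2"
      proof -
        have "(norm Ah)\<^sup>2 \<le> (\<beta> * norm h)\<^sup>2" using nAh by (intro power_mono) auto
        then have "(e0/\<beta>\<^sup>2) * (norm Ah)\<^sup>2 \<le> (e0/\<beta>\<^sup>2) * (\<beta> * norm h)\<^sup>2"
          using e0 by (intro mult_left_mono) auto
        also have "\<dots> = e0 * (norm h)\<^sup>2" using \<beta> by (simp add: power_mult_distrib)
        finally show ?thesis .
      qed
      have "u y + \<eta> \<bullet> h + (1/2) * ((Xa *v h) \<bullet> h) - e0 * (norm h)\<^sup>2
          \<le> u y + \<eta> \<bullet> h + (1/2) * ((Xa *v h) \<bullet> h) - (e0/\<beta>\<^sup>2) * (norm Ah)\<^sup>2" using err by simp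
      also have "\<dots> = ue x + \<eta> \<bullet> Ah + (1/2) * ((X *v Ah) \<bullet> Ah) - (e0/\<beta>\<^sup>2) * (norm Ah)\<^sup>2
                      - (\<rho> powr q / c0 + n\<eta> * \<tau> + a' / 2 * \<tau>\<^sup>2)"
        using XAh by (simp add: uex etaAh algebra_simps)
      also have "\<dots> \<le> ue z' - (\<rho> + \<tau>) powr q / c0" using A1 A3 by simp
      also have "\<dots> \<le> u z" using A2 by simp
      finally show "u y + \<eta> \<bullet> (z - y) + (1/2) * ((Xa *v (z - y)) \<bullet> (z - y)) - e0 * (norm (z - y))\<^sup>2 \<le> u z"
        by (simp add: h_def)
    qed
  qed
  ultimately show ?thesis unfolding subjet2_def Xa_def by auto
qed



lemma sqrt_diff_bound:
  fixes r s m :: real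
  assumes "r > 0" "s \<ge> m" "m > 0"
  shows "(sqrt r - sqrt s)\<^sup>2 \<le> (r - s)\<^sup>2 / m"
proof -
  have s: "s > 0" using assms by simp
  have "(sqrt r - sqrt s)\<^sup>2 * (sqrt r + sqrt s)\<^sup>2 = (r - s)\<^sup>2"
    using assms s by (simp add: power_mult_distrib[symmetric] algebra_simps power2_eq_square)
  moreover have "(sqrt r + sqrt s)\<^sup>2 \<ge> m"
  proof -
    have "(sqrt r + sqrt s)\<^sup>2 \<ge> (sqrt s)\<^sup>2" using assms s by (intro power_mono) auto
    then show ?thesis using s assms by simp
  qed
  ultimately have "(sqrt r - sqrt s)\<^sup>2 * m \<le> (r - s)\<^sup>2"
    by (metis mult_left_mono zero_le_power2)
  then show ?thesis using assms by (simp add: field_simps)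
qed

lemma festimate:
  fixes \<Omega> :: "(real^'n) set" and u ue p :: "real^'n \<Rightarrow> real"
  assumes "open \<Omega>" "x \<in> \<Omega>" "y \<in> \<Omega>" "q \<ge> 2" "\<epsilon> > 0"
    and ue_le: "\<And>z y'. y' \<in> \<Omega> \<Longrightarrow> ue z \<le> u y' + norm (z - y') powr q / (q * \<epsilon> powr (q-1))"
    and ue_x: "ue x = u y + norm (x - y) powr q / (q * \<epsilon> powr (q-1))"
    and sj: "(\<eta>, X) \<in> subjet2 \<Omega> ue x" and "x \<noteq> y" and "\<eta> \<noteq> 0"
    and eta: "\<eta> = (norm (x-y) powr (q-2) / \<epsilon> powr (q-1)) *\<^sub>R (x - y)"
    and sup: "visc_supersol \<Omega> p u"
    and lip: "lipschitz_on L \<Omega> p" and pm: "pmin > 1" "\<forall>z\<in>\<Omega>. pmin \<le> p z"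
  shows "Fop p x \<eta> X \<ge> - ((q-1) * 2 powr (q-2) * L\<^sup>2 / (pmin-1)) * (norm (x-y) powr q / \<epsilon> powr (q-1))"
proof -
  define \<rho> where "\<rho> = norm (x-y)"
  define e where "e = (1/norm (x-y)) *\<^sub>R (x-y)"
  define a' where "a' = (q-1)*(2*norm (x-y)) powr (q-2) / \<epsilon> powr (q-1)"
  define lam where "lam = (X *v e) \<bullet> e"
  define r where "r = p x - 1"
  define s where "s = p y - 1"
  define \<alpha> where "\<alpha> = sqrt r / sqrt s"
  define Xa where "Xa = X + (\<alpha>-1) *\<^sub>R (outer e (X *v e) + outer (X *v e) e)
            + ((\<alpha>-1)\<^sup>2*((X *v e) \<bullet> e - a')) *\<^sub>R outer e e"
  have \<rho>: "\<rho> > 0" using \<open>x \<noteq> y\<close> by (simp add: \<rho>_def)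
  have ne0: "norm e = 1" using \<rho> by (simp add: e_def \<rho>_def)
  have ne: "e \<bullet> e = 1" using ne0 by (simp add: power2_norm_eq_inner[symmetric])
  have r: "r \<ge> pmin - 1" "s \<ge> pmin - 1" using pm assms(2,3) by (auto simp: r_def s_def)
  then have rs: "r > 0" "s > 0" using pm by auto
  have a': "a' \<ge> 0" using assms(4) by (simp add: a'_def)
  define n\<eta> where "n\<eta> = \<rho> powr (q-1) / \<epsilon> powr (q-1)"
  have n\<eta>: "n\<eta> > 0" using \<rho> assms by (simp add: n\<eta>_def)
  have eta2: "\<eta> = n\<eta> *\<^sub>R e"
  proof -
    have w: "x - y = \<rho> *\<^sub>R e" using \<rho> by (simp add: e_def \<rho>_def)
    have "\<rho> powr (q-2) * \<rho> = \<rho> powr (q-1)" using \<rho> powr_add[of \<rho> "q-2" 1] by simp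
    moreover have "\<eta> = (\<rho> powr (q-2)/\<epsilon> powr (q-1)) *\<^sub>R (x - y)" using eta by (simp add: \<rho>_def)
    then have "\<eta> = (\<rho> powr (q-2)/\<epsilon> powr (q-1) * \<rho>) *\<^sub>R e" by (simp add: w)
    ultimately show ?thesis by (simp add: n\<eta>_def mult.commute)
  qed
  have symX: "symmetric_mat X" using sj by (simp add: subjet2_def)
  have "(\<eta>, Xa) \<in> subjet2 \<Omega> u y"
    unfolding Xa_def e_def a'_def
    by (rule transfer[OF assms(1,2,4,5) ue_le ue_x sj \<open>x \<noteq> y\<close> eta])
  then have F0: "Fop p y \<eta> Xa \<ge> 0"
    using sup assms(3) \<open>\<eta> \<noteq> 0\<close> by (auto simp: visc_supersol_def)
  define Q where "Q = lam + 2*(\<alpha>-1)*lam + (\<alpha>-1)\<^sup>2*(lam-a')"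
  have trXa: "trace Xa = trace X + 2*(\<alpha>-1)*lam + (\<alpha>-1)\<^sup>2*(lam-a')"
    unfolding Xa_def Xa_trace by (simp add: ne lam_def)
  have XaE: "(Xa *v e) \<bullet> e = Q"
    unfolding Xa_def Xa_inner[OF symX] by (simp add: ne Q_def lam_def inner_commute)
  have scal: "(M *v (c *\<^sub>R v)) \<bullet> (c *\<^sub>R v) = c\<^sup>2 * ((M *v v) \<bullet> v)" for M :: "real^'n^'n" and c v
    by (simp add: matrix_vector_mult_scaleR power2_eq_square)
  have nE: "(norm \<eta>)\<^sup>2 = n\<eta>\<^sup>2" using ne n\<eta> by (simp add: eta2 power2_norm_eq_inner[symmetric] power_mult_distrib)
  have F0': "trace X - lam + s * Q \<le> 0"
  proof -
    have "Fop p y \<eta> Xa = -(trace X + 2*(\<alpha>-1)*lam + (\<alpha>-1)\<^sup>2*(lam-a') + (p y - 2) * Q)"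
    proof -
      have X\<eta>: "(Xa *v \<eta>) \<bullet> \<eta> = n\<eta>\<^sup>2 * Q" by (simp only: eta2 scal XaE)
      show ?thesis unfolding Fop_def X\<eta> nE trXa using n\<eta> by simp
    qed
    with F0 show ?thesis by (simp add: Q_def s_def algebra_simps)
  qed
  have Fx: "Fop p x \<eta> X = -(trace X + (r - 1) * lam)"
  proof -
    have X\<eta>: "(X *v \<eta>) \<bullet> \<eta> = n\<eta>\<^sup>2 * lam" by (simp only: eta2 scal lam_def)
    show ?thesis unfolding Fop_def X\<eta> nE using n\<eta> by (simp add: r_def)
  qed
  have Qeq: "Q = \<alpha>\<^sup>2 * lam - (\<alpha>-1)\<^sup>2 * a'" by (simp add: Q_def power2_eq_square algebra_simps)
  have sa: "s * \<alpha>\<^sup>2 = r" using rs by (simp add: \<alpha>_def power_divide)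
  have sa2: "s * (\<alpha>-1)\<^sup>2 = (sqrt r - sqrt s)\<^sup>2"
  proof -
    have "s = (sqrt s)\<^sup>2" using rs by simp
    then have "s * (\<alpha>-1)\<^sup>2 = (sqrt s * (\<alpha> - 1))\<^sup>2" by (simp add: power_mult_distrib)
    also have "sqrt s * (\<alpha> - 1) = sqrt r - sqrt s" using rs by (simp add: \<alpha>_def algebra_simps)
    finally show ?thesis .
  qed
  have main: "Fop p x \<eta> X \<ge> - a' * (sqrt r - sqrt s)\<^sup>2"
  proof -
    have "s * Q = r * lam - a' * (sqrt r - sqrt s)\<^sup>2"
      by (simp add: Qeq right_diff_distrib mult.assoc[symmetric] sa sa2[symmetric])
    then show ?thesis using F0' Fx by (simp add: algebra_simps)
  qed
  have "(sqrt r - sqrt s)\<^sup>2 \<le> (r - s)\<^sup>2 / (pmin - 1)"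
    by (rule sqrt_diff_bound) (use rs r pm in auto)
  also have "(r - s)\<^sup>2 \<le> (L * \<rho>)\<^sup>2"
  proof -
    have "dist (p x) (p y) \<le> L * dist x y" using lip assms(2,3) by (auto simp: lipschitz_on_def)
    then have "\<bar>r - s\<bar> \<le> L * \<rho>" by (simp add: r_def s_def \<rho>_def dist_norm dist_real_def)
    then show ?thesis by (metis abs_ge_zero order_trans power2_abs power_mono)
  qed
  then have "(r - s)\<^sup>2 / (pmin - 1) \<le> (L * \<rho>)\<^sup>2 / (pmin - 1)" using pm by (simp add: divide_right_mono)
  finally have sq: "(sqrt r - sqrt s)\<^sup>2 \<le> (L * \<rho>)\<^sup>2 / (pmin - 1)" .
  have "a' * (sqrt r - sqrt s)\<^sup>2 \<le> a' * ((L * \<rho>)\<^sup>2 / (pmin - 1))"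
    using sq a' by (rule mult_left_mono)
  also have "\<dots> = ((q-1) * 2 powr (q-2) * L\<^sup>2 / (pmin-1)) * (\<rho> powr q / \<epsilon> powr (q-1))"
  proof -
    have "(2*\<rho>) powr (q-2) * \<rho>\<^sup>2 = 2 powr (q-2) * \<rho> powr q"
    proof -
      have "\<rho> powr (q-2) * \<rho>\<^sup>2 = \<rho> powr q" using powr_add[of \<rho> "q-2" 2] \<rho> by simp
      then show ?thesis using \<rho> by (simp add: powr_mult)
    qed
    then show ?thesis by (simp add: a'_def \<rho>_def[symmetric] power_mult_distrib field_simps)
  qed
  finally show ?thesis using main by (simp add: \<rho>_def)
qed



lemma cball_sub:
  fixes \<Omega> :: "(real^'n) set"
  assumes "x \<in> \<Omega>" "R < infdist x (frontier \<Omega>)"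
  shows "cball x R \<subseteq> \<Omega>"
proof (rule ccontr)
  assume "\<not> cball x R \<subseteq> \<Omega>"
  then obtain z where z: "z \<in> cball x R" "z \<notin> \<Omega>" by blast
  then have xc: "x \<in> cball x R" by (auto simp: dist_norm) (smt (verit) norm_ge_zero)
  have "cball x R \<inter> frontier \<Omega> \<noteq> {}"
  proof (rule connected_Int_frontier)
    show "connected (cball x R)" by (simp add: convex_connected)
    show "cball x R \<inter> \<Omega> \<noteq> {}" using xc assms(1) by (metis IntI empty_iff)
    show "cball x R - \<Omega> \<noteq> {}" using z by (metis DiffI empty_iff)
  qed
  then obtain f where f: "f \<in> cball x R" "f \<in> frontier \<Omega>" by auto
  then have "infdist x (frontier \<Omega>) \<le> dist x f" by (rule infdist_le[OF f(2)] | simp add: infdist_le)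
  then show False using f(1) assms(2) by simp
qed

lemma omega_small:
  fixes \<omega> :: "real \<Rightarrow> real"
  assumes "(\<omega> \<longlongrightarrow> 0) (at_right 0)" "e > 0"
  obtains d where "d > 0" "\<And>t. 0 < t \<Longrightarrow> t < d \<Longrightarrow> \<bar>\<omega> t\<bar> < e"
proof -
  have "\<forall>\<^sub>F t in at_right 0. dist (\<omega> t) 0 < e" using assms tendstoD by blast
  then obtain b where "b > 0" "\<And>t. t > 0 \<Longrightarrow> t < b \<Longrightarrow> dist (\<omega> t) 0 < e"
    unfolding eventually_at_right_field by auto
  then show ?thesis using that by auto
qed

lemma W_tendsto:
  fixes \<omega> g :: "real \<Rightarrow> real"
  assumes om: "(\<omega> \<longlongrightarrow> 0) (at_right 0)" and g: "(g \<longlongrightarrow> 0) (at_right 0)"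
    and gpos: "\<And>\<epsilon>. \<epsilon> > 0 \<Longrightarrow> g \<epsilon> > 0"
    and d0: "\<delta>0 > 0" "\<And>t. 0 < t \<Longrightarrow> t \<le> \<delta>0 \<Longrightarrow> \<bar>\<omega> t\<bar> \<le> 1"
  shows "((\<lambda>\<epsilon>. Sup ((\<lambda>t. \<bar>\<omega> t\<bar>) ` {0<..min (g \<epsilon>) \<delta>0})) \<longlongrightarrow> 0) (at_right 0)"
proof (rule tendstoI)
  fix e :: real assume e: "e > 0"
  obtain d where d: "d > 0" "\<And>t. 0 < t \<Longrightarrow> t < d \<Longrightarrow> \<bar>\<omega> t\<bar> < e/2"
    using omega_small[OF om, of "e/2"] e by auto
  have "\<forall>\<^sub>F \<epsilon> in at_right 0. g \<epsilon> < d" using order_tendstoD(2)[OF g d(1)] .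
  moreover have "\<forall>\<^sub>F \<epsilon> in at_right (0::real). \<epsilon> > 0" by (rule eventually_at_right_less)
  ultimately show "\<forall>\<^sub>F \<epsilon> in at_right 0. dist (Sup ((\<lambda>t. \<bar>\<omega> t\<bar>) ` {0<..min (g \<epsilon>) \<delta>0})) 0 < e"
  proof eventually_elim
    case (elim \<epsilon>)
    define S where "S = (\<lambda>t. \<bar>\<omega> t\<bar>) ` {0<..min (g \<epsilon>) \<delta>0}"
    have ne: "S \<noteq> {}" using gpos[OF elim(2)] d0 by (auto simp: S_def)
    have bdd: "bdd_above S" using d0 by (auto simp: S_def bdd_above_def intro!: exI[of _ 1])
    have "Sup S \<le> e/2"
    proof (rule cSup_least[OF ne])
      fix s assume "s \<in> S"
      then obtain t where t: "s = \<bar>\<omega> t\<bar>" "0 < t" "t \<le> min (g \<epsilon>) \<delta>0" by (auto simp: S_def)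
      then have "t < d" using elim by simp
      then show "s \<le> e/2" using d(2)[of t] t by simp
    qed
    moreover have "Sup S \<ge> 0"
    proof -
      obtain s where "s \<in> S" using ne by auto
      then have "s \<le> Sup S" using bdd by (rule cSup_upper)
      moreover have "s \<ge> 0" using \<open>s \<in> S\<close> by (auto simp: S_def)
      ultimately show ?thesis by simp
    qed
    ultimately show ?case using e by (simp add: S_def[symmetric] dist_real_def)
  qed
qed



theorem lemma5p3:
  fixes \<Omega> :: "(real^'n) set" and p :: "real^'n \<Rightarrow> real" and q :: real
    and \<omega> :: "real \<Rightarrow> real"
  assumes "open \<Omega>" and "bounded \<Omega>"
    and "\<exists>L. lipschitz_on L \<Omega> p"
    and "\<forall>x\<in>\<Omega>. p x > 1"
    and "\<exists>pmin>1. \<forall>x\<in>\<Omega>. pmin \<le> p x"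
    and "q \<ge> 2"
    and "(\<omega> \<longlongrightarrow> 0) (at_right 0)"
  shows "\<exists>E :: real \<Rightarrow> real. (E \<longlongrightarrow> 0) (at_right 0) \<and>
    (\<forall>u. uniformly_continuous_on \<Omega> u
        \<longrightarrow> (\<forall>x\<in>\<Omega>. \<forall>y\<in>\<Omega>. \<bar>u x - u y\<bar> \<le> \<omega> (norm (x - y)))
        \<longrightarrow> visc_supersol \<Omega> p u
        \<longrightarrow> (\<forall>\<epsilon>>0. \<forall>x\<in>inner_set \<Omega> (rad \<Omega> u q \<epsilon>). \<forall>\<eta> X.
              (\<eta>, X) \<in> subjet2 \<Omega> (infconv \<Omega> u q \<epsilon>) x \<longrightarrow> \<eta> \<noteq> 0 \<longrightarrow>
              norm \<eta> powr (min (p x - 2) 0) * Fop p x \<eta> X \<ge> E \<epsilon>))"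
proof -
  obtain L where lip: "lipschitz_on L \<Omega> p" using assms(3) by blast
  have L0: "L \<ge> 0" using lip by (rule lipschitz_on_nonneg)
  obtain pmin where pm: "pmin > 1" "\<forall>x\<in>\<Omega>. pmin \<le> p x" using assms(5) by blast
  have q: "q \<ge> 2" by (rule assms(6))
  obtain d where d: "d > 0" "\<And>t. 0 < t \<Longrightarrow> t < d \<Longrightarrow> \<bar>\<omega> t\<bar> < 1"
    using omega_small[OF assms(7), of 1] by auto
  define \<delta>0 where "\<delta>0 = d/2"
  have \<delta>0: "\<delta>0 > 0" "\<And>t. 0 < t \<Longrightarrow> t \<le> \<delta>0 \<Longrightarrow> \<bar>\<omega> t\<bar> \<le> 1"
    using d by (auto simp: \<delta>0_def intro: less_imp_le)
  define M where "M = q / \<delta>0"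
  have M: "M > 0" using q \<delta>0 by (simp add: M_def)
  define K where "K = (q-1) * 2 powr (q-2) * L\<^sup>2 / (pmin-1)"
  have K: "K \<ge> 0" using q pm by (simp add: K_def)
  define g where "g \<epsilon> = (q * \<epsilon> powr (q-1)) powr (1/q) + M powr (1/(q-1)) * \<epsilon>" for \<epsilon> :: real
  define W where "W r = Sup ((\<lambda>t. \<bar>\<omega> t\<bar>) ` {0<..min r \<delta>0})" for r
  define E where "E \<epsilon> = - (K * (g \<epsilon> * (1 + M) + q * W (g \<epsilon>)))" for \<epsilon>
  have gpos: "g \<epsilon> > 0" if "\<epsilon> > 0" for \<epsilon>
  proof -
    have "M powr (1/(q-1)) * \<epsilon> > 0" using M that by simp
    moreover have "(q * \<epsilon> powr (q-1)) powr (1/q) \<ge> 0" by simp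
    ultimately show ?thesis unfolding g_def by (rule add_nonneg_pos[rotated])
  qed
  have Wprop: "0 \<le> W r \<and> (\<forall>t. 0 < t \<longrightarrow> t \<le> min r \<delta>0 \<longrightarrow> \<bar>\<omega> t\<bar> \<le> W r)" if "r > 0" for r
  proof -
    define S where "S = (\<lambda>t. \<bar>\<omega> t\<bar>) ` {0<..min r \<delta>0}"
    have bdd: "bdd_above S" using \<delta>0 by (auto simp: S_def bdd_above_def intro!: exI[of _ 1])
    have up: "\<bar>\<omega> t\<bar> \<le> W r" if "0 < t" "t \<le> min r \<delta>0" for t
      unfolding W_def S_def[symmetric] by (rule cSup_upper[OF _ bdd]) (use that in \<open>auto simp: S_def\<close>)
    have "\<bar>\<omega> (min r \<delta>0)\<bar> \<le> W r" using that \<delta>0 by (intro up) auto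
    then show ?thesis using up by (meson abs_ge_zero order_trans)
  qed
  have Eneg: "E \<epsilon> \<le> 0" if "\<epsilon> > 0" for \<epsilon>
    using K gpos[OF that] Wprop[OF gpos[OF that]] M q by (simp add: E_def)
  have glim: "(g \<longlongrightarrow> 0) (at_right 0)"
  proof -
    have l1: "((\<lambda>\<epsilon>::real. \<epsilon> powr (q-1)) \<longlongrightarrow> 0) (at_right 0)"
      by (rule tendsto_zero_powrI) (use q in \<open>auto simp: eventually_at_right_less intro: eventually_mono[OF eventually_at_right_less] tendsto_ident_at\<close>)
    have l2: "((\<lambda>\<epsilon>::real. (q * \<epsilon> powr (q-1)) powr (1/q)) \<longlongrightarrow> 0) (at_right 0)"
      by (rule tendsto_zero_powrI) (use q l1 in \<open>auto intro: tendsto_mult_right_zero\<close>)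
    have l3: "((\<lambda>\<epsilon>::real. M powr (1/(q-1)) * \<epsilon>) \<longlongrightarrow> 0) (at_right 0)"
      by (intro tendsto_mult_right_zero tendsto_ident_at)
    show ?thesis unfolding g_def using tendsto_add[OF l2 l3] by simp
  qed
  have Elim: "(E \<longlongrightarrow> 0) (at_right 0)"
  proof -
    have "((\<lambda>\<epsilon>. W (g \<epsilon>)) \<longlongrightarrow> 0) (at_right 0)"
      unfolding W_def by (rule W_tendsto[OF assms(7) glim gpos \<delta>0])
    then have "((\<lambda>\<epsilon>. - (K * (g \<epsilon> * (1 + M) + q * W (g \<epsilon>)))) \<longlongrightarrow> - (K * (0 * (1 + M) + q * 0))) (at_right 0)"
      by (intro tendsto_intros glim)
    then show ?thesis by (simp add: E_def[abs_def])
  qed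
  show ?thesis
  proof (intro exI[of _ E] conjI Elim allI impI ballI)
    fix u :: "real^'n \<Rightarrow> real" and \<epsilon> :: real and x \<eta> and X :: "real^'n^'n"
    assume uc: "uniformly_continuous_on \<Omega> u"
      and om: "\<forall>x\<in>\<Omega>. \<forall>y\<in>\<Omega>. \<bar>u x - u y\<bar> \<le> \<omega> (norm (x - y))"
      and sup: "visc_supersol \<Omega> p u" and \<epsilon>: "\<epsilon> > 0"
      and xin: "x \<in> inner_set \<Omega> (rad \<Omega> u q \<epsilon>)"
      and sj: "(\<eta>, X) \<in> subjet2 \<Omega> (infconv \<Omega> u q \<epsilon>) x" and \<eta>0: "\<eta> \<noteq> 0"
    define c0 where "c0 = q * \<epsilon> powr (q-1)"
    have c0: "c0 > 0" using q \<epsilon> by (simp add: c0_def)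
    have x\<Omega>: "x \<in> \<Omega>" using xin by (simp add: inner_set_def)
    have bu: "bounded (u ` \<Omega>)" by (rule bounded_uniformly_continuous_image[OF uc assms(2)])
    have bddA: "bdd_above (u ` \<Omega>)" and bddB: "bdd_below (u ` \<Omega>)"
      using bu by (auto simp: bounded_imp_bdd_above bounded_imp_bdd_below)
    have supu: "u z \<le> Sup (u ` \<Omega>)" if "z \<in> \<Omega>" for z using bddA that by (auto intro: cSup_upper)
    have infu: "Inf (u ` \<Omega>) \<le> u z" if "z \<in> \<Omega>" for z using bddB that by (auto intro: cInf_lower)
    define os where "os = osc \<Omega> u"
    have os: "os \<ge> 0" using supu[OF x\<Omega>] infu[OF x\<Omega>] by (simp add: os_def osc_def)
    define r where "r = rad \<Omega> u q \<epsilon>"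
    have r: "r \<ge> 0" by (simp add: r_def rad_def)
    have rq: "r powr q = c0 * os"
    proof -
      have "r powr q = (c0 * os) powr (1/q * q)" by (simp add: r_def rad_def powr_powr c0_def os_def)
      also have "\<dots> = c0 * os" using q c0 os by (simp add: powr_one)
      finally show ?thesis .
    qed
    have rin: "r < infdist x (frontier \<Omega>)" using xin by (simp add: inner_set_def r_def)
    define R where "R = (r + infdist x (frontier \<Omega>)) / 2"
    have R: "r < R" "R < infdist x (frontier \<Omega>)" using rin by (auto simp: R_def)
    have cb: "cball x R \<subseteq> \<Omega>" by (rule cball_sub[OF x\<Omega> R(2)])
    define h where "h w = u w + norm (x - w) powr q / c0" for w
    have ucont: "continuous_on \<Omega> u" using uc by (rule uniformly_continuous_imp_continuous)
    have hcont: "continuous_on (cball x R) h"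
    proof -
      have c1: "continuous_on (cball x R) (\<lambda>w. norm (x - w) powr q)"
      proof (rule continuous_on_powr')
        show "continuous_on (cball x R) (\<lambda>w. norm (x - w))"
          by (intro continuous_on_norm continuous_on_diff continuous_on_const continuous_on_id)
      qed (use q in auto)
      have c2: "continuous_on (cball x R) u" by (rule continuous_on_subset[OF ucont cb])
      show ?thesis unfolding h_def
        by (intro continuous_on_add c2 continuous_on_divide c1 continuous_on_const) (use c0 in auto)
    qed
    have xcb: "x \<in> cball x R" using R r by simp
    obtain y where ycb: "y \<in> cball x R" and ymin: "\<And>w. w \<in> cball x R \<Longrightarrow> h y \<le> h w"
      using continuous_attains_inf[OF compact_cball _ hcont] xcb by blast
    have y\<Omega>: "y \<in> \<Omega>" using ycb cb by auto
    have ymin\<Omega>: "h y \<le> h w" if w: "w \<in> \<Omega>" for w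
    proof (cases "w \<in> cball x R")
      case True then show ?thesis by (rule ymin)
    next
      case False
      then have "norm (x - w) > R" by (simp add: dist_norm)
      then have "norm (x - w) powr q > R powr q" using R r q by (intro powr_less_mono2) auto
      moreover have "R powr q \<ge> r powr q" using R r q by (intro powr_mono2) auto
      ultimately have "norm (x - w) powr q / c0 > os" using rq c0 by (simp add: field_simps)
      then have hw: "h w > Inf (u ` \<Omega>) + os" using infu[OF w] by (simp add: h_def)
      have "Inf (u ` \<Omega>) + os = Sup (u ` \<Omega>)" by (simp add: os_def osc_def)
      moreover have "Sup (u ` \<Omega>) \<ge> h x" using supu[OF x\<Omega>] by (simp add: h_def)
      ultimately show ?thesis using ymin[OF xcb] hw by linarith
    qed
    have hnn: "bdd_below ((\<lambda>w. u w + norm (z - w) powr q / c0) ` \<Omega>)" for z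
    proof -
      have "Inf (u ` \<Omega>) \<le> u w + norm (z - w) powr q / c0" if "w \<in> \<Omega>" for w
        using infu[OF that] c0 by (simp add: add_increasing2)
      then show ?thesis by (auto simp: bdd_below_def)
    qed
    have ue_le: "infconv \<Omega> u q \<epsilon> z \<le> u y' + norm (z - y') powr q / (q * \<epsilon> powr (q-1))"
      if "y' \<in> \<Omega>" for z y'
      unfolding infconv_def c0_def[symmetric] by (rule cINF_lower[OF hnn that])
    have ue_x: "infconv \<Omega> u q \<epsilon> x = u y + norm (x - y) powr q / (q * \<epsilon> powr (q-1))"
    proof (rule antisym)
      show "infconv \<Omega> u q \<epsilon> x \<le> u y + norm (x - y) powr q / (q * \<epsilon> powr (q-1))"
        by (rule ue_le[OF y\<Omega>])
      show "u y + norm (x - y) powr q / (q * \<epsilon> powr (q-1)) \<le> infconv \<Omega> u q \<epsilon> x"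
        unfolding infconv_def c0_def[symmetric]
        by (rule cINF_greatest) (use x\<Omega> ymin\<Omega> in \<open>auto simp: h_def\<close>)
    qed
    have c1: "x \<noteq> y \<and> \<eta> = (norm (x-y) powr (q-2) / \<epsilon> powr (q-1)) *\<^sub>R (x - y)"
      by (rule core1[where ue="infconv \<Omega> u q \<epsilon>" and u=u and y=y, OF assms(1) x\<Omega> q \<epsilon> ue_le[OF y\<Omega>] ue_x sj \<eta>0])
    then have xy: "x \<noteq> y" and eta: "\<eta> = (norm (x-y) powr (q-2) / \<epsilon> powr (q-1)) *\<^sub>R (x - y)" by auto
    have Fb: "Fop p x \<eta> X \<ge> - K * (norm (x-y) powr q / \<epsilon> powr (q-1))"
      unfolding K_def
      by (rule festimate[where ue="infconv \<Omega> u q \<epsilon>" and u=u and y=y, OF assms(1) x\<Omega> y\<Omega> q \<epsilon> ue_le ue_x sj xy \<eta>0 eta sup lip pm])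
    define \<rho> where "\<rho> = norm (x - y)"
    have \<rho>: "\<rho> > 0" using xy by (simp add: \<rho>_def)
    define n where "n = \<rho> powr (q-1) / \<epsilon> powr (q-1)"
    have n: "n > 0" using \<rho> \<epsilon> by (simp add: n_def)
    have nrm: "norm \<eta> = n"
    proof -
      have "norm \<eta> = \<rho> powr (q-2) / \<epsilon> powr (q-1) * \<rho>" using eta by (simp add: \<rho>_def)
      also have "\<rho> powr (q-2) * \<rho> = \<rho> powr (q-1)" using \<rho> powr_add[of \<rho> "q-2" 1] by simp
      then have "\<rho> powr (q-2) / \<epsilon> powr (q-1) * \<rho> = n" by (simp add: n_def field_simps)
      finally show ?thesis .
    qed
    have rhoq: "\<rho> powr q / \<epsilon> powr (q-1) = \<rho> * n"
    proof -
      have "\<rho> powr q = \<rho> * \<rho> powr (q-1)" using \<rho> powr_add[of \<rho> 1 "q-1"] by simp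
      then show ?thesis by (simp add: n_def)
    qed
    have obound: "n * t \<le> q * \<omega> t" if t: "0 < t" "t \<le> \<rho>" for t
    proof -
      define z where "z = y + (t/\<rho>) *\<^sub>R (x - y)"
      have xz: "x - z = (1 - t/\<rho>) *\<^sub>R (x - y)" by (simp add: z_def algebra_simps)
      have nxz: "norm (x - z) = \<rho> - t"
      proof -
        have "norm (x - z) = \<bar>1 - t/\<rho>\<bar> * \<rho>" unfolding xz norm_scaleR \<rho>_def ..
        also have "\<bar>1 - t/\<rho>\<bar> = 1 - t/\<rho>" using t \<rho> by simp
        also have "(1 - t/\<rho>) * \<rho> = \<rho> - t" using \<rho> by (simp add: field_simps)
        finally show ?thesis .
      qed
      have nzy: "norm (z - y) = t" using t \<rho> by (simp add: z_def \<rho>_def[symmetric])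
      have "dist x z \<le> R" using nxz ycb t by (simp add: dist_norm \<rho>_def)
      then have z\<Omega>: "z \<in> \<Omega>" using cb by auto
      have "h y \<le> h z" by (rule ymin\<Omega>[OF z\<Omega>])
      then have A: "\<rho> powr q / c0 - (\<rho> - t) powr q / c0 \<le> u z - u y"
        by (simp add: h_def nxz \<rho>_def norm_minus_commute)
      have "(\<rho> - t) powr q \<le> (\<rho> - t) * \<rho> powr (q-1)"
      proof (cases "\<rho> = t")
        case True then show ?thesis by simp
      next
        case False
        then have pos: "\<rho> - t > 0" using t by simp
        have "(\<rho> - t) powr q = (\<rho> - t) * (\<rho> - t) powr (q-1)" using pos powr_add[of "\<rho>-t" 1 "q-1"] by simp
        also have "(\<rho> - t) powr (q-1) \<le> \<rho> powr (q-1)" using pos t q by (intro powr_mono2) auto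
        then have "(\<rho> - t) * (\<rho> - t) powr (q-1) \<le> (\<rho> - t) * \<rho> powr (q-1)" using pos by (intro mult_left_mono) auto
        finally show ?thesis .
      qed
      moreover have "\<rho> powr q = \<rho> * \<rho> powr (q-1)" using \<rho> powr_add[of \<rho> 1 "q-1"] by simp
      ultimately have "t * \<rho> powr (q-1) \<le> \<rho> powr q - (\<rho> - t) powr q" by (simp add: algebra_simps)
      then have "t * \<rho> powr (q-1) / c0 \<le> \<rho> powr q / c0 - (\<rho> - t) powr q / c0"
        using c0 by (simp add: divide_right_mono diff_divide_distrib[symmetric])
      also have "\<dots> \<le> \<omega> t" using A om[rule_format, OF z\<Omega> y\<Omega>] nzy by simp
      finally have "t * \<rho> powr (q-1) / c0 \<le> \<omega> t" .
      then have "t * \<rho> powr (q-1) / \<epsilon> powr (q-1) \<le> q * \<omega> t" using c0 q \<epsilon> by (simp add: c0_def field_simps)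
      then show ?thesis by (simp add: n_def mult.commute)
    qed
    have key: "\<rho> * (1 + n) \<le> g \<epsilon> * (1 + M) + q * W (g \<epsilon>)"
    proof (cases "\<rho> \<le> \<delta>0")
      case True
      have o1: "n * \<rho> \<le> q * \<omega> \<rho>" using obound[of \<rho>] \<rho> by simp
      have o2: "\<omega> \<rho> \<le> 1" using \<delta>0(2)[of \<rho>] \<rho> True by simp
      have "q * \<omega> \<rho> \<le> q * 1" using o2 q by (intro mult_left_mono) auto
      then have "\<rho> powr q / \<epsilon> powr (q-1) \<le> q" using o1 rhoq by (simp add: mult.commute)
      then have "\<rho> powr q \<le> q * \<epsilon> powr (q-1)" using \<epsilon> by (simp add: field_simps)
      then have "(\<rho> powr q) powr (1/q) \<le> (q * \<epsilon> powr (q-1)) powr (1/q)" using q \<rho> by (intro powr_mono2) auto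
      moreover have "(\<rho> powr q) powr (1/q) = \<rho>" using q \<rho> by (simp add: powr_powr)
      moreover have "(q * \<epsilon> powr (q-1)) powr (1/q) \<le> g \<epsilon>" using \<epsilon> M by (simp add: g_def)
      ultimately have \<rho>g: "\<rho> \<le> g \<epsilon>" by simp
      have "\<bar>\<omega> \<rho>\<bar> \<le> W (g \<epsilon>)" using Wprop[OF gpos[OF \<epsilon>]] \<rho> \<rho>g True by simp
      then have "n * \<rho> \<le> q * W (g \<epsilon>)" using o1 q by (smt (verit) abs_ge_self mult_left_mono)
      moreover have "\<rho> \<le> g \<epsilon> * (1 + M)" using \<rho>g M gpos[OF \<epsilon>] by (smt (verit) mult_left_mono mult_cancel_left1)
      ultimately show ?thesis by (simp add: algebra_simps)
    next
      case False
      have o1: "n * \<delta>0 \<le> q * \<omega> \<delta>0" using obound[of \<delta>0] \<delta>0 False by simp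
      have o2: "\<omega> \<delta>0 \<le> 1" using \<delta>0(2)[of \<delta>0] \<delta>0(1) by (simp add: abs_le_iff)
      have "q * \<omega> \<delta>0 \<le> q * 1" using o2 q by (intro mult_left_mono) auto
      then have "n * \<delta>0 \<le> q" using o1 by simp
      then have nM: "n \<le> M" using \<delta>0 by (simp add: M_def field_simps)
      have "\<rho> powr (q-1) = n * \<epsilon> powr (q-1)" using \<epsilon> by (simp add: n_def)
      also have "\<dots> \<le> M * \<epsilon> powr (q-1)" using nM \<epsilon> by (simp add: mult_right_mono)
      finally have "(\<rho> powr (q-1)) powr (1/(q-1)) \<le> (M * \<epsilon> powr (q-1)) powr (1/(q-1))"
        using q \<rho> by (intro powr_mono2) auto
      moreover have "(\<rho> powr (q-1)) powr (1/(q-1)) = \<rho>" using q \<rho> by (simp add: powr_powr)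
      moreover have "(M * \<epsilon> powr (q-1)) powr (1/(q-1)) = M powr (1/(q-1)) * \<epsilon>"
        using q \<epsilon> M by (simp add: powr_mult powr_powr)
      moreover have "M powr (1/(q-1)) * \<epsilon> \<le> g \<epsilon>" by (simp add: g_def)
      ultimately have \<rho>g: "\<rho> \<le> g \<epsilon>" by simp
      have "\<rho> * (1 + n) \<le> g \<epsilon> * (1 + M)" using \<rho>g nM n \<rho> by (intro mult_mono) auto
      moreover have "0 \<le> q * W (g \<epsilon>)" using Wprop[OF gpos[OF \<epsilon>]] q by simp
      ultimately show ?thesis by simp
    qed
    define m where "m = min (p x - 2) 0"
    have m: "m + 1 \<ge> 0" "m + 1 \<le> 1" using assms(4) x\<Omega> by (auto simp: m_def)
    show "norm \<eta> powr (min (p x - 2) 0) * Fop p x \<eta> X \<ge> E \<epsilon>"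
    proof (cases "Fop p x \<eta> X \<ge> 0")
      case True
      then have "norm \<eta> powr (min (p x - 2) 0) * Fop p x \<eta> X \<ge> 0" by simp
      then show ?thesis using Eneg[OF \<epsilon>] by linarith
    next
      case False
      have np: "n powr m * n \<le> 1 + n"
      proof -
        have "n powr m * n = n powr (m + 1)" using n powr_add[of n m 1] by simp
        also have "\<dots> \<le> 1 + n"
        proof (cases "n \<le> 1")
          case True
          then have "n powr (m+1) \<le> 1" using n m by (intro powr_le1) auto
          then show ?thesis using n by simp
        next
          case False
          then have "n powr (m+1) \<le> n powr 1" using m by (intro powr_mono) auto
          then show ?thesis using n by simp
        qed
        finally show ?thesis .
      qed
      have "E \<epsilon> = - (K * (g \<epsilon> * (1 + M) + q * W (g \<epsilon>)))" by (simp add: E_def)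
      also have "\<dots> \<le> - (K * (\<rho> * (1 + n)))" using key K by (simp add: mult_left_mono)
      also have "\<dots> \<le> - (K * (\<rho> * (n powr m * n)))" using np K \<rho> by (simp add: mult_left_mono)
      also have "\<dots> = n powr m * (- K * (\<rho> powr q / \<epsilon> powr (q-1)))" by (simp add: rhoq)
      also have "\<dots> \<le> n powr m * Fop p x \<eta> X"
        using Fb by (intro mult_left_mono) (auto simp: \<rho>_def)
      finally show ?thesis by (simp add: nrm m_def)
    qed
  qed
qed


end
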